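(* Let $k\in\,]0,2]$ and let $f_0$ be a spherically symmetric static solution of the Einstein–Vlasov system of the form $f_0=\big(1-e^{\mu_0(r)-\mu_0(R_0)}\mathcal E\big)_+^k$, where $\mathcal E=\sqrt{1+|v|^2}=\sqrt{1+w^2+\ell^2/r^2}$. Then $$\mathcal D(f_0)=-4\pi e^{-\mu_0(R_0)}\int_0^{R_0}r^2(p_0+\rho_0)\,e^{\mu_0+\lambda_0}\,dr.$$
   Context: Notation: $r=|x|$, $w=\frac{x\cdot v}{r}$, $\ell=|x\wedge v|$. $\chi(s)=\frac{k}{k+1}s^{1+1/k}$, $\mathcal D(f)=\int\int e^{\lambda_f(|x|)}(\chi(f)-f)\,dx\,dv$. For $f_0$: $\rho_0(r)=\int\sqrt{1+|v|^2}f_0\,dv$, $p_0(r)=\int\frac{w^2}{\sqrt{1+|v|^2}}f_0\,dv$ (radial pressure), $m_0(r)=4\pi\int_0^rs^2\rho_0(s)ds$, $e^{-2\lambda_0}=1-2m_0/r$. A static solution of this form means that $\mu_0$ is the metric function solving $\mu_0'(r)=e^{2\lambda_0(r)}\big(\frac{m_0(r)}{r^2}+4\pi r p_0(r)\big)$ with $\mu_0(r)\to0$ as $r\to\infty$, consistently with $f_0$ being given by the displayed formula, and $R_0>0$ is the radius of the spatial support of $f_0$ (so $f_0(x,v)=0$ for $|x|\ge R_0$); the metric is $-e^{2\mu_0}dt^2+e^{2\lambda_0}dr^2+r^2d\Omega^2$. *)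

theory Defs
  imports "HOL-Analysis.Analysis"
begin

definition energy :: "real^3 \<Rightarrow> real" where
  "energy v = sqrt (1 + (norm v)^2)"

definition chi :: "real \<Rightarrow> real \<Rightarrow> real" where
  "chi k s = k / (k + 1) * s powr (1 + 1 / k)"

definition f_static :: "(real \<Rightarrow> real) \<Rightarrow> real \<Rightarrow> real \<Rightarrow> real^3 \<Rightarrow> real^3 \<Rightarrow> real" where
  "f_static mu R0 k x v = (max 0 (1 - exp (mu (norm x) - mu R0) * energy v)) powr k"

definition rho_of :: "(real^3 \<Rightarrow> real^3 \<Rightarrow> real) \<Rightarrow> real^3 \<Rightarrow> real" where
  "rho_of f x = (\<integral>v. energy v * f x v \<partial>lborel)"

definition prad_of :: "(real^3 \<Rightarrow> real^3 \<Rightarrow> real) \<Rightarrow> real^3 \<Rightarrow> real" where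
  "prad_of f x = (\<integral>v. ((x \<bullet> v) / norm x)^2 / energy v * f x v \<partial>lborel)"

definition mass_of :: "(real \<Rightarrow> real) \<Rightarrow> real \<Rightarrow> real" where
  "mass_of rho r = 4 * pi * (\<integral>s\<in>{0..r}. s^2 * rho s \<partial>lborel)"

text \<open>lambda determined by exp(-2 lambda) = 1 - 2m/r.\<close>
definition lambda_of :: "(real \<Rightarrow> real) \<Rightarrow> real \<Rightarrow> real" where
  "lambda_of m r = - ln (1 - 2 * m r / r) / 2"

text \<open>D(f) = int int exp(lambda_f(|x|)) (chi(f) - f) dx dv  (lambda_f supplied as argument).\<close>
definition calD :: "real \<Rightarrow> (real \<Rightarrow> real) \<Rightarrow> (real^3 \<Rightarrow> real^3 \<Rightarrow> real) \<Rightarrow> real" where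
  "calD k lam f = (\<integral>z. exp (lam (norm (fst z))) * (chi k (f (fst z) (snd z)) - f (fst z) (snd z))
                     \<partial>(lborel :: ((real^3) \<times> (real^3)) measure))"

end

theory Submission
  imports Defs
begin

lemma norm_shift:
  fixes v :: "real^3"
  shows "norm (v + t *\<^sub>R axis 1 1)^2 = norm v^2 + 2*t*(v$1) + t^2"
proof -
  have "norm (v + t *\<^sub>R axis 1 1)^2 = (v + t *\<^sub>R axis 1 1) \<bullet> (v + t *\<^sub>R axis 1 1)"
    by (rule power2_norm_eq_inner)
  also have "\<dots> = v \<bullet> v + 2*t*(v$1) + t^2"
    by (simp add: inner_add_left inner_add_right inner_axis inner_commute power2_eq_square algebra_simps)
  finally show ?thesis by (simp add: power2_norm_eq_inner)
qed


lemma comp_shift: fixes v :: "real^3" shows "(v + t *\<^sub>R axis 1 1)$1 = v$1 + t"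
  by (simp add: axis_def)

lemma energy_shift: fixes v :: "real^3"
  shows "energy (v + t *\<^sub>R axis 1 1) = sqrt (1 + (norm v^2 + 2*t*(v$1) + t^2))"
  by (simp add: energy_def norm_shift)

lemma comp_sq_le: fixes v :: "real^3" shows "(v$i)^2 \<le> norm v^2"
proof -
  have "\<bar>v$i\<bar>^2 \<le> (norm v)^2" by (rule power_mono) (auto simp: component_le_norm_cart)
  then show ?thesis by simp
qed

lemma P_deriv0:
  fixes k u :: real assumes k: "0 < k"
  shows "((\<lambda>u. max 0 u powr (k+1)) has_real_derivative (k+1) * max 0 u powr k) (at u)"
proof (cases "u > 0")
  case True
  have d: "((\<lambda>u. u powr (k+1)) has_real_derivative (k+1) * u powr k) (at u)"
    using True by (auto intro!: derivative_eq_intros simp: powr_diff)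
  show ?thesis
  proof (rule has_field_derivative_transform_within_open[OF _ _ True[unfolded greaterThan_iff[symmetric]]])
    show "((\<lambda>u. u powr (k+1)) has_real_derivative (k+1) * max 0 u powr k) (at u)"
      using d True by simp
  qed auto
next
  case False
  show ?thesis
  proof (cases "u < 0")
    case True
    have "((\<lambda>u. 0::real) has_real_derivative (k+1) * max 0 u powr k) (at u)"
      using True by simp
    then show ?thesis
      by (rule has_field_derivative_transform_within_open[where S="{..<0}"]) (use True in auto)
  next
    case False2: False
    with False have u0: "u = 0" by simp
    have "((\<lambda>y. max 0 y powr k) \<longlongrightarrow> 0) (at 0)"
      by (rule tendsto_zero_powrI) (auto intro!: tendsto_eq_intros simp: k)
    then have "((\<lambda>y. (max 0 y powr (k+1) - max 0 0 powr (k+1)) / (y - 0)) \<longlongrightarrow> 0) (at 0)"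
    proof (rule Lim_transform_eventually)
      show "\<forall>\<^sub>F y in at 0. max 0 y powr k = (max 0 y powr (k+1) - max 0 0 powr (k+1)) / (y - 0)"
      proof (rule eventually_at_filter[THEN iffD2], rule always_eventually, intro allI impI)
        fix y :: real assume "y \<noteq> 0"
        then show "max 0 y powr k = (max 0 y powr (k+1) - max 0 0 powr (k+1)) / (y - 0)"
          by (cases "y > 0") (auto simp: powr_add)
      qed
    qed
    then show ?thesis using u0 k by (simp add: has_field_derivative_iff)
  qed
qed


definition Pk :: "real \<Rightarrow> real \<Rightarrow> real" where "Pk k u = max 0 u powr (k+1)"

lemma P_deriv:
  fixes k u :: real assumes k: "0 < k"
  shows "(Pk k has_real_derivative (k+1) * max 0 u powr k) (at u)"
  unfolding Pk_def[abs_def] using P_deriv0[OF k] .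

lemma phi_deriv:
  fixes a n c k t :: real
  assumes k: "0 < k" and c: "0 < c" and n: "a^2 \<le> n"
  defines "S \<equiv> \<lambda>t. sqrt (1 + (n + 2*t*a + t^2))"
  shows "((\<lambda>t. (a + t) * Pk k (1 - c * S t)) has_real_derivative
     Pk k (1 - c * S t) + (a + t) * ((k+1) * max 0 (1 - c * S t) powr k * (- c * ((a + t) / S t)))) (at t)"
proof -
  have pos: "0 < 1 + (n + 2*t*a + t^2)"
  proof -
    have "0 \<le> (a+t)^2" by simp
    then show ?thesis using n by (simp add: power2_eq_square algebra_simps)
  qed
  have dS: "(S has_real_derivative (a + t) / S t) (at t)"
    unfolding S_def using pos
    by (auto intro!: derivative_eq_intros simp: field_simps)
  have dP: "((\<lambda>t. Pk k (1 - c * S t)) has_real_derivative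
      (k+1) * max 0 (1 - c * S t) powr k * (- c * ((a + t) / S t))) (at t)"
    by (rule DERIV_chain2[OF P_deriv[OF k]]) (auto intro!: derivative_eq_intros dS)
  show ?thesis
    by (auto intro!: derivative_eq_intros dP)
qed

lemma phi_bound:
  fixes a n c k t :: real
  assumes k: "0 < k" and c: "0 < c" and n: "a^2 \<le> n"
  defines "S \<equiv> sqrt (1 + (n + 2*t*a + t^2))"
  shows "\<bar>Pk k (1 - c * S) + (a + t) * ((k+1) * max 0 (1 - c * S) powr k * (- c * ((a + t) / S)))\<bar> \<le> k + 2"
proof -
  have sq: "(a+t)^2 \<le> n + 2*t*a + t^2" using n by (simp add: power2_eq_square algebra_simps)
  have nn: "0 \<le> n + 2*t*a + t^2" using sq zero_le_power2[of "a+t"] by linarith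
  have S1: "1 \<le> S" unfolding S_def using nn by simp
  have aS: "(a+t)^2 \<le> S^2" unfolding S_def using sq nn by simp
  have P01: "0 \<le> Pk k (1 - c*S) \<and> Pk k (1 - c*S) \<le> 1"
  proof -
    have "max 0 (1 - c*S) \<le> 1" using c S1 by auto
    then have "max 0 (1 - c*S) powr (k+1) \<le> 1 powr (k+1)"
      by (intro powr_mono2) (use k in auto)
    then show ?thesis by (simp add: Pk_def)
  qed
  have T: "\<bar>(a + t) * ((k+1) * max 0 (1 - c * S) powr k * (- c * ((a + t) / S)))\<bar> \<le> k + 1"
  proof (cases "1 - c*S > 0")
    case True
    have m1: "max 0 (1 - c * S) powr k \<le> 1"
    proof -
      have "max 0 (1 - c*S) \<le> 1" using c S1 by auto
      then have "max 0 (1 - c*S) powr k \<le> 1 powr k"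
        by (intro powr_mono2) (use k in auto)
      then show ?thesis by simp
    qed
    have "\<bar>(a + t) * ((k+1) * max 0 (1 - c * S) powr k * (- c * ((a + t) / S)))\<bar>
        = (k+1) * max 0 (1 - c * S) powr k * (c * ((a+t)^2 / S))"
      using k c S1 by (simp add: abs_mult power2_eq_square)
    also have "\<dots> \<le> (k+1) * 1 * 1"
    proof (intro mult_mono m1)
      have "(a+t)^2 / S \<le> S^2 / S" using aS S1 by (intro divide_right_mono) auto
      also have "\<dots> = S" using S1 by (simp add: power2_eq_square)
      finally have "c * ((a+t)^2 / S) \<le> c * S" using c by (intro mult_left_mono) auto
      then show "c * ((a+t)^2 / S) \<le> 1" using True by linarith
    qed (use k c S1 in auto)
    finally show ?thesis by simp
  next
    case False
    then have "max 0 (1 - c*S) = 0" by simp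
    then show ?thesis using k by simp
  qed
  show ?thesis by (rule order_trans[OF abs_triangle_ineq]) (use P01 T in auto)
qed

definition fk :: "real \<Rightarrow> real \<Rightarrow> real^3 \<Rightarrow> real" where
  "fk k c v = max 0 (1 - c * energy v) powr k"

lemma vec_nth_meas [measurable]: "(\<lambda>v::real^3. v $ i) \<in> borel_measurable borel"
  by (intro borel_measurable_continuous_onI continuous_intros)

lemma energy_meas [measurable]: "energy \<in> borel_measurable borel"
  unfolding energy_def[abs_def] by measurable

lemma fk_meas [measurable]: "(\<lambda>v. fk k c v) \<in> borel_measurable borel"
  unfolding fk_def[abs_def] by measurable

lemma energy_ge: "norm v < energy v" "1 \<le> energy v" "0 < energy v"
proof -
  show "norm v < energy v" unfolding energy_def
    by (rule real_less_rsqrt) simp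
  show "1 \<le> energy v" unfolding energy_def by simp
  then show "0 < energy v" by simp
qed

lemma fk_zero: assumes "0 < c" "1/c \<le> norm v" "0 < k" shows "fk k c v = 0"
proof -
  have "1 \<le> c * norm v" using assms by (simp add: field_simps)
  also have "\<dots> < c * energy v" using energy_ge(1)[of v] assms by simp
  finally show ?thesis using assms by (simp add: fk_def)
qed

lemma fk_bounds: assumes "0 < c" "0 < k" shows "0 \<le> fk k c v" "fk k c v \<le> 1"
proof -
  show "0 \<le> fk k c v" by (simp add: fk_def)
  have "max 0 (1 - c * energy v) \<le> 1" using assms energy_ge(3)[of v] by auto
  then have "max 0 (1 - c*energy v) powr k \<le> 1 powr k"
    by (intro powr_mono2) (use assms in auto)
  then show "fk k c v \<le> 1" by (simp add: fk_def)
qed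

lemma integrable_bsupp:
  fixes F :: "real^3 \<Rightarrow> real"
  assumes [measurable]: "F \<in> borel_measurable borel"
    and "\<And>v. R < norm v \<Longrightarrow> F v = 0" and "\<And>v. \<bar>F v\<bar> \<le> B"
  shows "integrable lborel F"
proof (rule Bochner_Integration.integrable_bound)
  show "integrable lborel (\<lambda>v. B * indicator (cball 0 R) v :: real)"
    by (intro integrable_mult_right integrable_real_indicator emeasure_bounded_finite) auto
  show "AE v in lborel. norm (F v) \<le> norm (B * indicator (cball 0 R) v :: real)"
  proof (rule AE_I2)
    fix v :: "real^3"
    have B: "0 \<le> B" using assms(3)[of v] by simp
    show "norm (F v) \<le> norm (B * indicator (cball 0 R) v :: real)"
      using assms(2,3)[of v] B by (cases "v \<in> cball 0 R") auto
  qed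
qed simp

lemma psi_shift:
  fixes v :: "real^3"
  shows "(v + t *\<^sub>R axis 1 1)$1 * fk (k+1) c (v + t *\<^sub>R axis 1 1)
       = (v$1 + t) * Pk k (1 - c * sqrt (1 + (norm v^2 + 2*t*(v$1) + t^2)))"
  by (simp add: comp_shift energy_shift fk_def Pk_def)

lemma ibp:
  assumes k: "0 < k" and c: "0 < c"
  shows "(\<integral>v. fk (k+1) c v \<partial>lborel)
       = (k+1) * c * (\<integral>v. (v$1)^2 / energy v * fk k c v \<partial>lborel)"
proof -
  define e :: "real^3" where "e = axis 1 1"
  define \<psi> where "\<psi> v = v$1 * fk (k+1) c v" for v :: "real^3"
  define D where "D v = fk (k+1) c v - (k+1) * c * ((v$1)^2 / energy v * fk k c v)" for v :: "real^3"
  define h :: "nat \<Rightarrow> real" where "h n = inverse (real (Suc n))" for n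
  define s where "s n v = (\<psi> (v + h n *\<^sub>R e) - \<psi> v) / h n" for n v
  define w where "w v = (k+2) * indicator (cball 0 (1/c+1)) v" for v :: "real^3"
  have h01: "0 < h n" "h n \<le> 1" for n by (auto simp: h_def field_simps)
  have [measurable]: "\<psi> \<in> borel_measurable borel" unfolding \<psi>_def[abs_def] by measurable
  have [measurable]: "D \<in> borel_measurable borel" unfolding D_def[abs_def] by measurable
  have [measurable]: "s n \<in> borel_measurable borel" for n unfolding s_def[abs_def] by measurable
  have fk1: "fk (k+1) c v = 0" if "1/c < norm v" for v
    using fk_zero[of c v "k+1"] that c k by simp
  have fk0: "fk k c v = 0" if "1/c < norm v" for v
    using fk_zero[of c v k] that c k by simp
  have int_psi: "integrable lborel \<psi>"
  proof (rule integrable_bsupp[where R="1/c" and B="1/c"])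
    fix v :: "real^3"
    show "\<bar>\<psi> v\<bar> \<le> 1/c"
    proof (cases "1/c < norm v")
      case True then show ?thesis using fk1 c by (simp add: \<psi>_def)
    next
      case False
      have "\<bar>\<psi> v\<bar> = \<bar>v$1\<bar> * fk (k+1) c v" using fk_bounds[of c "k+1" v] c k
        by (simp add: \<psi>_def abs_mult)
      also have "\<dots> \<le> norm v * 1"
        by (intro mult_mono component_le_norm_cart fk_bounds) (use c k in auto)
      finally show ?thesis using False by simp
    qed
  qed (auto simp: \<psi>_def fk1)
  have int_f1: "integrable lborel (fk (k+1) c)"
    by (rule integrable_bsupp[where R="1/c" and B=1]) (use fk1 fk_bounds[of c "k+1"] c k in auto)
  have int_f2: "integrable lborel (\<lambda>v. (v$1)^2 / energy v * fk k c v)"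
  proof (rule integrable_bsupp[where R="1/c" and B="(1/c)^2"])
    fix v :: "real^3"
    show "\<bar>(v$1)^2 / energy v * fk k c v\<bar> \<le> (1/c)^2"
    proof (cases "1/c < norm v")
      case True then show ?thesis using fk0 c by simp
    next
      case False
      have E: "1 \<le> energy v" "0 < energy v" using energy_ge by auto
      have "\<bar>(v$1)^2 / energy v * fk k c v\<bar> = (v$1)^2 / energy v * fk k c v"
        using fk_bounds[of c k v] c k E by simp
      also have "\<dots> \<le> (v$1)^2 / 1 * 1"
        by (intro mult_mono divide_left_mono fk_bounds) (use c k E in auto)
      also have "\<dots> \<le> (norm v)^2"
        using comp_sq_le[of v 1] by simp
      also have "\<dots> \<le> (1/c)^2" using False by (intro power_mono) auto
      finally show ?thesis .
    qed
  qed (auto simp: fk0)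
  have shift: "(\<integral>v. \<psi> (v + t *\<^sub>R e) \<partial>lborel) = (\<integral>v. \<psi> v \<partial>lborel)" for t
  proof -
    have "(\<integral>v. \<psi> v \<partial>lborel) = (\<integral>v. \<psi> v \<partial>(distr lborel borel ((+) (t *\<^sub>R e))))"
      by (simp add: lborel_distr_plus)
    also have "\<dots> = (\<integral>v. \<psi> (t *\<^sub>R e + v) \<partial>lborel)"
      by (rule integral_distr) auto
    finally show ?thesis by (simp add: add.commute)
  qed
  have int_s0: "(\<integral>v. s n v \<partial>lborel) = 0" for n
  proof -
    have int_psi': "integrable lborel (\<lambda>v. \<psi> (v + h n *\<^sub>R e))"
    proof -
      have "integrable (distr lborel borel ((+) (h n *\<^sub>R e))) \<psi>"
        using int_psi by (simp add: lborel_distr_plus)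
      then have "integrable lborel (\<lambda>v. \<psi> (h n *\<^sub>R e + v))"
        by (subst (asm) integrable_distr_eq) auto
      then show ?thesis by (simp add: add.commute)
    qed
    have "(\<integral>v. s n v \<partial>lborel) = (\<integral>v. \<psi> (v + h n *\<^sub>R e) - \<psi> v \<partial>lborel) / h n"
      unfolding s_def by (rule integral_divide_zero)
    also have "\<dots> = 0"
      by (subst Bochner_Integration.integral_diff[OF int_psi' int_psi]) (simp add: shift)
    finally show ?thesis .
  qed
  have lim: "(\<lambda>n. s n v) \<longlonglongrightarrow> D v" for v
  proof -
    define \<phi> where "\<phi> t = (v$1 + t) * Pk k (1 - c * sqrt (1 + (norm v^2 + 2*t*(v$1) + t^2)))" for t
    have phi_eq: "\<psi> (v + t *\<^sub>R e) = \<phi> t" for t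
      unfolding \<psi>_def \<phi>_def e_def by (rule psi_shift)
    have phi0: "\<psi> v = \<phi> 0" using phi_eq[of 0] by simp
    have n: "(v$1)^2 \<le> norm v^2"
      by (rule comp_sq_le)
    have "(\<phi> has_real_derivative D v) (at 0)"
    proof -
      have d: "(\<phi> has_real_derivative
         Pk k (1 - c * sqrt (1 + (norm v^2 + 2*0*(v$1) + 0^2))) + (v$1 + 0) * ((k+1) * max 0 (1 - c * sqrt (1 + (norm v^2 + 2*0*(v$1) + 0^2))) powr k
           * (- c * ((v$1 + 0) / sqrt (1 + (norm v^2 + 2*0*(v$1) + 0^2)))))) (at 0)"
        unfolding \<phi>_def by (rule phi_deriv[OF k c n])
      have "Pk k (1 - c * sqrt (1 + (norm v^2 + 2*0*(v$1) + 0^2))) + (v$1 + 0) * ((k+1) * max 0 (1 - c * sqrt (1 + (norm v^2 + 2*0*(v$1) + 0^2))) powr k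
           * (- c * ((v$1 + 0) / sqrt (1 + (norm v^2 + 2*0*(v$1) + 0^2))))) = D v"
        by (simp add: D_def fk_def Pk_def energy_def power2_eq_square algebra_simps add_divide_distrib)
      with d show ?thesis by simp
    qed
    then have dq: "((\<lambda>y. (\<phi> y - \<phi> 0) / (y - 0)) \<longlongrightarrow> D v) (at 0)"
      by (simp add: has_field_derivative_iff)
    have hl: "filterlim h (at 0) sequentially"
      unfolding filterlim_at h_def
      using LIMSEQ_inverse_real_of_nat by auto
    have "(\<lambda>n. (\<phi> (h n) - \<phi> 0) / (h n - 0)) \<longlonglongrightarrow> D v"
      by (rule filterlim_compose[OF dq hl])
    then show ?thesis by (simp add: s_def phi_eq phi0)
  qed
  have bnd: "norm (s n v) \<le> w v" for n v
  proof (cases "1/c + 1 < norm v")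
    case True
    have a: "\<psi> v = 0" using True fk1 by (simp add: \<psi>_def)
    have "norm v \<le> norm (v + h n *\<^sub>R e) + norm (h n *\<^sub>R e)"
      by (metis add_diff_cancel_right' norm_triangle_ineq4)
    also have "norm (h n *\<^sub>R e) = h n" using h01[of n] by (simp add: e_def)
    finally have "1/c < norm (v + h n *\<^sub>R e)" using True h01[of n] by simp
    then have b: "\<psi> (v + h n *\<^sub>R e) = 0" using fk1 by (simp add: \<psi>_def)
    show ?thesis using a b k by (simp add: s_def w_def)
  next
    case False
    define \<phi> where "\<phi> t = (v$1 + t) * Pk k (1 - c * sqrt (1 + (norm v^2 + 2*t*(v$1) + t^2)))" for t
    have phi_eq: "\<psi> (v + t *\<^sub>R e) = \<phi> t" for t
      unfolding \<psi>_def \<phi>_def e_def by (rule psi_shift)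
    have phi0: "\<psi> v = \<phi> 0" using phi_eq[of 0] by simp
    have n: "(v$1)^2 \<le> norm v^2"
      by (rule comp_sq_le)
    define S where "S t = sqrt (1 + (norm v^2 + 2*t*(v$1) + t^2))" for t
    define \<phi>' where "\<phi>' t = Pk k (1 - c * S t) + (v$1 + t) * ((k+1) * max 0 (1 - c * S t) powr k * (- c * ((v$1 + t) / S t)))" for t
    have "\<exists>z. 0 < z \<and> z < h n \<and> \<phi> (h n) - \<phi> 0 = (h n - 0) * \<phi>' z"
    proof (rule MVT2)
      show "0 < h n" by (rule h01)
      fix x :: real
      show "(\<phi> has_real_derivative \<phi>' x) (at x)"
        unfolding \<phi>_def \<phi>'_def S_def by (rule phi_deriv[OF k c n])
    qed
    then obtain z where z: "\<phi> (h n) - \<phi> 0 = h n * \<phi>' z" by auto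
    have "\<bar>\<phi>' z\<bar> \<le> k + 2" unfolding \<phi>'_def S_def by (rule phi_bound[OF k c n])
    moreover have "s n v = \<phi>' z" using z h01[of n] by (simp add: s_def phi_eq phi0)
    ultimately show ?thesis using False by (simp add: w_def)
  qed
  have int_w: "integrable lborel w"
    unfolding w_def
    by (intro integrable_mult_right integrable_real_indicator emeasure_bounded_finite) auto
  have "(\<lambda>n. \<integral>v. s n v \<partial>lborel) \<longlonglongrightarrow> (\<integral>v. D v \<partial>lborel)"
    by (rule integral_dominated_convergence[where w=w]) (use int_w lim bnd in auto)
  then have "(\<integral>v. D v \<partial>lborel) = 0"
    using int_s0 by (simp add: LIMSEQ_const_iff)
  moreover have "(\<integral>v. D v \<partial>lborel) = (\<integral>v. fk (k+1) c v \<partial>lborel) - (k+1) * c * (\<integral>v. (v$1)^2 / energy v * fk k c v \<partial>lborel)"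
  proof -
    have i2: "integrable lborel (\<lambda>v. (k+1)*c*((v$1)^2/energy v * fk k c v))"
      using int_f2 by (rule integrable_mult_right)
    have "(\<integral>v. D v \<partial>lborel) = (\<integral>v. fk (k+1) c v \<partial>lborel) - (\<integral>v. (k+1)*c*((v$1)^2/energy v * fk k c v) \<partial>lborel)"
      unfolding D_def by (rule Bochner_Integration.integral_diff[OF int_f1 i2])
    also have "(\<integral>v. (k+1)*c*((v$1)^2/energy v * fk k c v) \<partial>lborel) = (k+1)*c*(\<integral>v. (v$1)^2/energy v * fk k c v \<partial>lborel)"
      by (rule integral_mult_right_zero)
    finally show ?thesis .
  qed
  ultimately show ?thesis by simp
qed

lemma distr_norm3:
  "distr (lborel :: (real^3) measure) borel norm = density lborel (\<lambda>r. ennreal (4*pi*r^2) * indicator {0..} r)"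
  (is "?M = ?N")
proof (rule measure_eqI_generator_eq_countable[where E="range (\<lambda>a. {..a::real})" and \<Omega>=UNIV and A="range (\<lambda>n::nat. {..real n})"])
  show "Int_stable (range (\<lambda>a. {..a::real}))"
    by (auto simp: Int_stable_def)
  show "sets ?M = sigma_sets UNIV (range (\<lambda>a. {..a::real}))"
    by (simp add: borel_eq_atMost)
  show "sets ?N = sigma_sets UNIV (range (\<lambda>a. {..a::real}))"
    by (simp add: borel_eq_atMost)
  have em: "emeasure ?M {..a} = ennreal (4/3*pi*(max 0 a)^3)" for a :: real
  proof -
    have "emeasure ?M {..a} = emeasure lborel {x::real^3. norm x \<le> a}"
      by (subst emeasure_distr) (auto simp: vimage_def)
    also have "\<dots> = ennreal (4/3*pi*(max 0 a)^3)"
    proof (cases "0 \<le> a")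
      case True
      have "{x::real^3. norm x \<le> a} = cball 0 a" by (auto simp: cball_def dist_norm)
      then show ?thesis using True by (simp add: emeasure_cball unit_ball_vol_3)
    next
      case False
      then have "{x::real^3. norm x \<le> a} = {}" by (auto intro: order.trans[OF norm_ge_zero])
      then show ?thesis using False by simp
    qed
    finally show ?thesis .
  qed
  have en: "emeasure ?N {..a} = ennreal (4/3*pi*(max 0 a)^3)" for a :: real
  proof -
    have "emeasure ?N {..a} = (\<integral>\<^sup>+r. ennreal (4*pi*r^2) * indicator {0..} r * indicator {..a} r \<partial>lborel)"
      by (subst emeasure_density) auto
    also have "\<dots> = (\<integral>\<^sup>+r. ennreal (4*pi*r^2) * indicator {0..max 0 a} r \<partial>lborel)"
    proof (rule nn_integral_cong)
      fix r :: real
      show "ennreal (4*pi*r^2) * indicator {0..} r * indicator {..a} r = ennreal (4*pi*r^2) * indicator {0..max 0 a} r"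
        by (cases "r = 0") (auto simp: indicator_def)
    qed
    also have "\<dots> = ennreal (4/3*pi*(max 0 a)^3 - 4/3*pi*0^3)"
      by (rule nn_integral_FTC_Icc[where F="\<lambda>r. 4/3*pi*r^3"]) (auto intro!: derivative_eq_intros simp: power2_eq_square power3_eq_cube)
    finally show ?thesis by simp
  qed
  show "\<And>X. X \<in> range (\<lambda>a. {..a::real}) \<Longrightarrow> emeasure ?M X = emeasure ?N X"
    using em en by auto
  show "range (\<lambda>n::nat. {..real n}) \<subseteq> range (\<lambda>a. {..a::real})" by auto
  show "\<Union> (range (\<lambda>n::nat. {..real n})) = UNIV"
    by (auto simp: real_arch_simple)
  show "countable (range (\<lambda>n::nat. {..real n}))" by simp
  show "\<And>X. X \<in> range (\<lambda>n::nat. {..real n}) \<Longrightarrow> emeasure ?M X \<noteq> \<infinity>"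
    using em by auto
qed auto

lemma polar3:
  fixes H :: "real \<Rightarrow> ennreal"
  assumes [measurable]: "H \<in> borel_measurable borel"
  shows "(\<integral>\<^sup>+x. H (norm x) \<partial>(lborel :: (real^3) measure))
       = (\<integral>\<^sup>+r. ennreal (4*pi*r^2) * indicator {0..} r * H r \<partial>lborel)"
proof -
  have "(\<integral>\<^sup>+x. H (norm x) \<partial>(lborel :: (real^3) measure)) = (\<integral>\<^sup>+r. H r \<partial>distr (lborel :: (real^3) measure) borel norm)"
    by (subst nn_integral_distr) auto
  also have "\<dots> = (\<integral>\<^sup>+r. H r \<partial>density lborel (\<lambda>r. ennreal (4*pi*r^2) * indicator {0..} r))"
    by (simp only: distr_norm3)
  also have "\<dots> = (\<integral>\<^sup>+r. ennreal (4*pi*r^2) * indicator {0..} r * H r \<partial>lborel)"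
    by (subst nn_integral_density) auto
  finally show ?thesis .
qed

lemma int_fk: assumes k: "0 < k" and c: "0 < c" shows "integrable lborel (fk k c)"
  by (rule integrable_bsupp[where R="1/c" and B=1]) (use fk_zero fk_bounds[of c k] c k in \<open>auto simp: less_imp_le\<close>)

lemma int_Efk: assumes k: "0 < k" and c: "0 < c"
  shows "integrable lborel (\<lambda>v. energy v * fk k c v)"
proof (rule integrable_bsupp[where R="1/c" and B="1 + 1/c"])
  fix v :: "real^3"
  show "\<bar>energy v * fk k c v\<bar> \<le> 1 + 1/c"
  proof (cases "1/c < norm v")
    case True then show ?thesis using fk_zero[of c v k] c k by simp
  next
    case False
    have E: "energy v \<le> 1 + norm v" unfolding energy_def
      by (rule real_sqrt_le_iff'[THEN iffD2]) (auto simp: power2_eq_square algebra_simps)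
    have "\<bar>energy v * fk k c v\<bar> = energy v * fk k c v"
      using fk_bounds[of c k v] c k energy_ge(3)[of v] by simp
    also have "\<dots> \<le> (1 + norm v) * 1"
      by (intro mult_mono E fk_bounds) (use c k energy_ge(3)[of v] in auto)
    finally show ?thesis using False by simp
  qed
qed (use fk_zero[of c _ k] c k in \<open>auto simp: less_imp_le\<close>)

lemma int_v1fk: assumes k: "0 < k" and c: "0 < c"
  shows "integrable lborel (\<lambda>v. (v$1)^2 / energy v * fk k c v)"
proof (rule integrable_bsupp[where R="1/c" and B="(1/c)^2"])
  fix v :: "real^3"
  show "\<bar>(v$1)^2 / energy v * fk k c v\<bar> \<le> (1/c)^2"
  proof (cases "1/c < norm v")
    case True then show ?thesis using fk_zero[of c v k] c k by simp
  next
    case False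
    have E: "1 \<le> energy v" "0 < energy v" using energy_ge by auto
    have "\<bar>(v$1)^2 / energy v * fk k c v\<bar> = (v$1)^2 / energy v * fk k c v"
      using fk_bounds[of c k v] c k E by simp
    also have "\<dots> \<le> (v$1)^2 / 1 * 1"
      by (intro mult_mono divide_left_mono fk_bounds) (use c k E in auto)
    also have "\<dots> \<le> (norm v)^2"
      using comp_sq_le[of v 1] by simp
    also have "\<dots> \<le> (1/c)^2" using False by (intro power_mono) auto
    finally show ?thesis .
  qed
qed (use fk_zero[of c _ k] c k in \<open>auto simp: less_imp_le\<close>)

lemma chi_fk: assumes k: "0 < k" shows "chi k (fk k c v) = k/(k+1) * fk (k+1) c v"
proof -
  have "(max 0 (1 - c * energy v) powr k) powr (1 + 1/k) = max 0 (1 - c * energy v) powr (k * (1 + 1/k))"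
    by (rule powr_powr)
  also have "k * (1 + 1/k) = k + 1" using k by (simp add: field_simps)
  finally show ?thesis by (simp add: chi_def fk_def)
qed

lemma fk_diff: assumes k: "0 < k" shows "fk k c v - fk (k+1) c v = c * energy v * fk k c v"
proof (cases "0 < 1 - c * energy v")
  case True
  have "fk (k+1) c v = (1 - c * energy v) powr k * (1 - c * energy v)"
    using True by (simp add: fk_def powr_add)
  then show ?thesis using True by (simp add: fk_def algebra_simps)
next
  case False
  then show ?thesis using k by (simp add: fk_def)
qed

lemma fk_chi_nonneg: assumes k: "0 < k" and c: "0 < c"
  shows "0 \<le> fk k c v - chi k (fk k c v)"
proof -
  have "0 \<le> c * energy v * fk k c v"
    using c fk_bounds[OF c k, of v] energy_ge(3)[of v] by simp
  then have "fk (k+1) c v \<le> fk k c v"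
    using fk_diff[OF k, of c v] by linarith
  moreover have "0 \<le> fk (k+1) c v" using fk_bounds[of c "k+1" v] c k by simp
  moreover have "k/(k+1) \<le> 1" using k by simp
  ultimately have "k/(k+1) * fk (k+1) c v \<le> 1 * fk k c v"
    by (intro mult_mono) (use k in auto)
  then show ?thesis by (simp add: chi_fk[OF k])
qed

lemma int_chi: assumes k: "0 < k" and c: "0 < c"
  shows "integrable lborel (\<lambda>v. chi k (fk k c v) - fk k c v)"
  unfolding chi_fk[OF k]
  by (intro Bochner_Integration.integrable_diff integrable_mult_right int_fk) (use k c in auto)

lemma inner_identity:
  assumes k: "0 < k" and c: "0 < c"
  shows "(\<integral>v. chi k (fk k c v) - fk k c v \<partial>lborel)
      = - c * ((\<integral>v. energy v * fk k c v \<partial>lborel) + (\<integral>v. (v$1)^2 / energy v * fk k c v \<partial>lborel))"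
proof -
  have k1: "0 < k + 1" using k by simp
  have i1: "integrable lborel (fk (k+1) c)" by (rule int_fk[OF k1 c])
  have i0: "integrable lborel (fk k c)" by (rule int_fk[OF k c])
  have iE: "integrable lborel (\<lambda>v. c * (energy v * fk k c v))"
    by (intro integrable_mult_right int_Efk[OF k c])
  have A: "(\<integral>v. chi k (fk k c v) - fk k c v \<partial>lborel)
      = k/(k+1) * (\<integral>v. fk (k+1) c v \<partial>lborel) - (\<integral>v. fk k c v \<partial>lborel)"
    unfolding chi_fk[OF k]
    by (subst Bochner_Integration.integral_diff) (use i1 i0 in \<open>auto intro!: integrable_mult_right\<close>)
  have B: "(\<integral>v. fk k c v \<partial>lborel) = (\<integral>v. fk (k+1) c v \<partial>lborel) + c * (\<integral>v. energy v * fk k c v \<partial>lborel)"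
  proof -
    have "(\<integral>v. fk k c v \<partial>lborel) = (\<integral>v. fk (k+1) c v + c * (energy v * fk k c v) \<partial>lborel)"
      by (rule Bochner_Integration.integral_cong) (use fk_diff[OF k, of c] in \<open>auto simp: algebra_simps\<close>)
    also have "\<dots> = (\<integral>v. fk (k+1) c v \<partial>lborel) + (\<integral>v. c * (energy v * fk k c v) \<partial>lborel)"
      by (rule Bochner_Integration.integral_add[OF i1 iE])
    finally show ?thesis by simp
  qed
  have C: "(\<integral>v. fk (k+1) c v \<partial>lborel) = (k+1) * c * (\<integral>v. (v$1)^2 / energy v * fk k c v \<partial>lborel)"
    by (rule ibp[OF k c])
  show ?thesis
    unfolding A B C using k by (simp add: field_simps)
qed

lemma fk_meas2 [measurable (raw)]:
  assumes [measurable]: "c \<in> borel_measurable M" "g \<in> borel_measurable M"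
  shows "(\<lambda>x. fk k (c x) (g x)) \<in> borel_measurable M"
  unfolding fk_def energy_def by measurable

lemma energy_meas2 [measurable (raw)]:
  assumes [measurable]: "g \<in> borel_measurable M"
  shows "(\<lambda>x. energy (g x)) \<in> borel_measurable M"
  unfolding energy_def by measurable

lemma vec_nth_meas2 [measurable (raw)]:
  assumes [measurable]: "g \<in> borel_measurable M"
  shows "(\<lambda>x. (g x :: real^3) $ i) \<in> borel_measurable M"
  using measurable_compose[OF assms vec_nth_meas] by simp

theorem lemma8p1:
  fixes k R0 :: real and mu0 :: "real \<Rightarrow> real"
  defines "f0 \<equiv> f_static mu0 R0 k"
    and "rho0 \<equiv> (\<lambda>r. rho_of (f_static mu0 R0 k) (r *\<^sub>R axis 1 1))"
    and "p0 \<equiv> (\<lambda>r. prad_of (f_static mu0 R0 k) (r *\<^sub>R axis 1 1))"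
    and "m0 \<equiv> (mass_of (\<lambda>r. rho_of (f_static mu0 R0 k) (r *\<^sub>R axis 1 1)))"
    and "lam0 \<equiv> lambda_of (mass_of (\<lambda>r. rho_of (f_static mu0 R0 k) (r *\<^sub>R axis 1 1)))"
  assumes "0 < k" and "k \<le> 2" and "0 < R0"
    and "\<forall>r>0. 2 * m0 r < r"
    and "\<forall>r>0. (mu0 has_real_derivative
                 exp (2 * lam0 r) * (m0 r / r^2 + 4 * pi * r * p0 r)) (at r)"
    and "(mu0 \<longlongrightarrow> 0) at_top"
    and "\<forall>x v. R0 \<le> norm x \<longrightarrow> f0 x v = 0"
    and "\<forall>x. norm x < R0 \<longrightarrow> (\<exists>v. 0 < f0 x v)"
  shows "calD k lam0 f0
           = - 4 * pi * exp (- mu0 R0)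
               * (\<integral>r\<in>{0..R0}. r^2 * (p0 r + rho0 r) * exp (mu0 r + lam0 r) \<partial>lborel)"
proof -
  have k: "0 < k" by (rule assms(6))
  have supp: "\<And>x v. R0 \<le> norm x \<Longrightarrow> f_static mu0 R0 k x v = 0"
    using assms(12) unfolding f0_def by blast
  have cont: "continuous_on {0<..} mu0"
    by (rule continuous_at_imp_continuous_on) (use assms(10) DERIV_isCont in auto)
  define mu1 where "mu1 r = (if 0 < r then mu0 r else mu0 0)" for r
  have mu1_meas[measurable]: "mu1 \<in> borel_measurable borel"
  proof -
    have eq: "mu1 = (\<lambda>r. indicator {0<..} r *\<^sub>R mu0 r + indicator {..0} r *\<^sub>R mu0 0)"
      by (auto simp: mu1_def fun_eq_iff indicator_def)
    have [measurable]: "(\<lambda>r. indicator {0<..} r *\<^sub>R mu0 r) \<in> borel_measurable borel"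
      by (rule borel_measurable_continuous_on_indicator) (auto simp: cont)
    show ?thesis unfolding eq by measurable
  qed
  define cc where "cc r = exp (mu1 r - mu0 R0)" for r
  have cc_pos: "0 < cc r" for r by (simp add: cc_def)
  have cc_meas[measurable]: "cc \<in> borel_measurable borel" unfolding cc_def[abs_def] by measurable
  have F_eq: "f_static mu0 R0 k x v = fk k (cc (norm x)) v" for x v
    by (cases "norm x = 0") (auto simp: f_static_def fk_def cc_def mu1_def)
  have norm_e: "norm (r *\<^sub>R (axis 1 1 :: real^3)) = \<bar>r\<bar>" for r by simp
  have rho_eq: "rho0 r = (\<integral>v. energy v * fk k (cc \<bar>r\<bar>) v \<partial>lborel)" for r
    unfolding rho0_def rho_of_def F_eq norm_e ..
  have p_eq: "p0 r = (\<integral>v. (((r *\<^sub>R axis 1 1) \<bullet> v) / \<bar>r\<bar>)^2 / energy v * fk k (cc \<bar>r\<bar>) v \<partial>lborel)" for r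
    unfolding p0_def prad_of_def F_eq norm_e ..
  have p_eq_pos: "p0 r = (\<integral>v. (v$1)^2 / energy v * fk k (cc r) v \<partial>lborel)" if "0 < r" for r
    unfolding p_eq using that by (simp add: inner_axis')
  have rho_meas[measurable]: "rho0 \<in> borel_measurable borel"
    unfolding rho_eq[abs_def] by measurable
  have p_meas[measurable]: "p0 \<in> borel_measurable borel"
    unfolding p_eq[abs_def] by measurable
  have m0_eq: "m0 = mass_of rho0" unfolding m0_def rho0_def ..
  have m0_meas[measurable]: "m0 \<in> borel_measurable borel"
  proof -
    have eq: "m0 = (\<lambda>r. 4 * pi * (\<integral>s. (if 0 \<le> s \<and> s \<le> r then 1 else 0) * (s^2 * rho0 s) \<partial>lborel))"
      unfolding m0_eq mass_of_def[abs_def] set_lebesgue_integral_def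
      by (intro ext arg_cong[where f="\<lambda>x. 4 * pi * x"] Bochner_Integration.integral_cong) (auto simp: indicator_def)
    show ?thesis unfolding eq by measurable
  qed
  have lam_eq: "lam0 = lambda_of m0" unfolding lam0_def m0_def ..
  have lam_meas[measurable]: "lam0 \<in> borel_measurable borel"
    unfolding lam_eq lambda_of_def[abs_def] by measurable

  define Hf where "Hf r = exp (lam0 r) * cc r * (rho0 r + p0 r)" for r
  define G where "G z = exp (lam0 (norm (fst z))) * (fk k (cc (norm (fst z))) (snd z) - chi k (fk k (cc (norm (fst z))) (snd z)))"
    for z :: "(real^3) \<times> (real^3)"
  have G_meas[measurable]: "G \<in> borel_measurable (lborel \<Otimes>\<^sub>M lborel)"
    unfolding G_def[abs_def] chi_def by measurable
  have G_nn: "0 \<le> G z" for z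
    unfolding G_def using fk_chi_nonneg[OF k cc_pos] by simp
  have rho_nn: "0 \<le> rho0 r" for r
    unfolding rho_eq by (rule Bochner_Integration.integral_nonneg) (use energy_ge(3) fk_bounds(1)[OF cc_pos k] in \<open>simp add: less_imp_le\<close>)
  have p_nn: "0 \<le> p0 r" for r
    unfolding p_eq by (rule Bochner_Integration.integral_nonneg) (use energy_ge(3) fk_bounds(1)[OF cc_pos k] in \<open>simp add: less_imp_le\<close>)
  have Hf_meas[measurable]: "Hf \<in> borel_measurable borel" unfolding Hf_def[abs_def] by measurable
  have L1: "calD k lam0 f0 = - (\<integral>z. G z \<partial>(lborel \<Otimes>\<^sub>M lborel))"
    unfolding calD_def f0_def F_eq lborel_prod G_def
    by (subst Bochner_Integration.integral_minus[symmetric]) (simp add: algebra_simps)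
  have L2: "(\<integral>z. G z \<partial>(lborel \<Otimes>\<^sub>M lborel)) = enn2real (\<integral>\<^sup>+z. ennreal (G z) \<partial>(lborel \<Otimes>\<^sub>M lborel))"
    by (rule integral_eq_nn_integral) (auto simp: G_nn)
  have L3: "(\<integral>\<^sup>+z. ennreal (G z) \<partial>(lborel \<Otimes>\<^sub>M lborel)) = (\<integral>\<^sup>+x. \<integral>\<^sup>+v. ennreal (G (x, v)) \<partial>lborel \<partial>lborel)"
    by (rule lborel.nn_integral_fst[symmetric]) measurable
  have inner: "(\<integral>\<^sup>+v. ennreal (G (x, v)) \<partial>lborel) = ennreal (Hf (norm x))" if x0: "x \<noteq> 0" for x :: "real^3"
  proof -
    define r where "r = norm x"
    have r: "0 < r" using x0 by (simp add: r_def)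
    have G_x: "G (x, v) = exp (lam0 r) * (fk k (cc r) v - chi k (fk k (cc r) v))" for v
      by (simp add: G_def r_def)
    have int: "integrable lborel (\<lambda>v. exp (lam0 r) * (fk k (cc r) v - chi k (fk k (cc r) v)))"
    proof -
      have "integrable lborel (\<lambda>v. exp (lam0 r) * - (chi k (fk k (cc r) v) - fk k (cc r) v))"
        by (intro integrable_mult_right integrable_minus int_chi[OF k cc_pos])
      then show ?thesis by simp
    qed
    have "(\<integral>\<^sup>+v. ennreal (G (x, v)) \<partial>lborel) = ennreal (\<integral>v. exp (lam0 r) * (fk k (cc r) v - chi k (fk k (cc r) v)) \<partial>lborel)"
      unfolding G_x by (rule nn_integral_eq_integral[OF int]) (use fk_chi_nonneg[OF k cc_pos] in auto)
    also have "(\<integral>v. exp (lam0 r) * (fk k (cc r) v - chi k (fk k (cc r) v)) \<partial>lborel)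
        = exp (lam0 r) * - (\<integral>v. chi k (fk k (cc r) v) - fk k (cc r) v \<partial>lborel)"
      by (simp add: Bochner_Integration.integral_minus[symmetric])
    also have "\<dots> = Hf r"
      unfolding inner_identity[OF k cc_pos] Hf_def rho_eq p_eq_pos[OF r] using r by simp
    finally show ?thesis by (simp add: r_def)
  qed
  have L4: "(\<integral>\<^sup>+x. \<integral>\<^sup>+v. ennreal (G (x, v)) \<partial>lborel \<partial>lborel) = (\<integral>\<^sup>+x. ennreal (Hf (norm x)) \<partial>(lborel :: (real^3) measure))"
    by (rule nn_integral_cong_AE) (use AE_lborel_singleton[of 0] inner in \<open>auto elim!: AE_mp\<close>)
  have L5: "(\<integral>\<^sup>+x. ennreal (Hf (norm x)) \<partial>(lborel :: (real^3) measure))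
      = (\<integral>\<^sup>+r. ennreal (4*pi*r^2) * indicator {0..} r * ennreal (Hf r) \<partial>lborel)"
    by (rule polar3) measurable
  define K where "K = 4 * pi * exp (- mu0 R0)"
  have K: "0 < K" by (simp add: K_def)
  define J where "J r = indicator {0..R0} r * (r^2 * (p0 r + rho0 r) * exp (mu1 r + lam0 r))" for r
  have J_meas[measurable]: "J \<in> borel_measurable borel" unfolding J_def[abs_def] by measurable
  have J_nn: "0 \<le> J r" for r unfolding J_def using rho_nn p_nn by (simp add: indicator_def)
  have R1: "(\<integral>r\<in>{0..R0}. r^2 * (p0 r + rho0 r) * exp (mu0 r + lam0 r) \<partial>lborel) = (\<integral>r. J r \<partial>lborel)"
    unfolding set_lebesgue_integral_def J_def
    by (rule Bochner_Integration.integral_cong) (auto simp: indicator_def mu1_def)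
  have R2: "(\<integral>r. J r \<partial>lborel) = enn2real (\<integral>\<^sup>+r. ennreal (J r) \<partial>lborel)"
    by (rule integral_eq_nn_integral) (auto simp: J_nn)
  have pt: "ennreal K * ennreal (J r) = ennreal (4*pi*r^2) * indicator {0..} r * ennreal (Hf r)" for r
  proof (cases "r < 0")
    case True then show ?thesis by (simp add: J_def)
  next
    case False
    show ?thesis
    proof (cases "R0 \<le> r")
      case True
      have z: "fk k (cc \<bar>r\<bar>) v = 0" for v
        using supp[of "r *\<^sub>R axis 1 1" v] True False by (simp add: F_eq)
      have "rho0 r = 0" "p0 r = 0" unfolding rho_eq p_eq z by simp_all
      then show ?thesis by (simp add: J_def Hf_def)
    next
      case False2: False
      have "K * J r = 4*pi*r^2 * Hf r"
        using False False2
        by (simp add: K_def J_def Hf_def cc_def exp_add exp_diff exp_minus field_simps)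
      moreover have "0 \<le> 4*pi*r^2" by simp
      moreover have "0 \<le> Hf r" unfolding Hf_def
        by (intro mult_nonneg_nonneg add_nonneg_nonneg rho_nn p_nn less_imp_le[OF cc_pos]) simp
      ultimately show ?thesis using False K J_nn
        by (simp add: ennreal_mult[symmetric])
    qed
  qed
  have R3: "ennreal K * (\<integral>\<^sup>+r. ennreal (J r) \<partial>lborel) = (\<integral>\<^sup>+r. ennreal (4*pi*r^2) * indicator {0..} r * ennreal (Hf r) \<partial>lborel)"
    by (subst nn_integral_cmult[symmetric]) (auto simp: pt)
  have "calD k lam0 f0 = - enn2real (\<integral>\<^sup>+r. ennreal (4*pi*r^2) * indicator {0..} r * ennreal (Hf r) \<partial>lborel)"
    unfolding L1 L2 L3 L4 L5 ..
  also have "\<dots> = - (K * enn2real (\<integral>\<^sup>+r. ennreal (J r) \<partial>lborel))"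
    unfolding R3[symmetric] using K by (simp add: enn2real_mult)
  also have "\<dots> = - 4 * pi * exp (- mu0 R0) * (\<integral>r\<in>{0..R0}. r^2 * (p0 r + rho0 r) * exp (mu0 r + lam0 r) \<partial>lborel)"
    unfolding R1 R2 K_def by simp
  finally show ?thesis .
qed

end
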